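(* Let $n\ge3$, $\Omega\subset\mathbb R^n$ a bounded convex domain, $M>0$ and $0\le\gamma<n-2$. Let $u\in C(\overline\Omega)$ be convex with $u=0$ on $\partial\Omega$ and $\det D^2u\le M\operatorname{dist}^\gamma(\cdot,\partial\Omega)$ in $\Omega$ in the sense of Aleksandrov. Then $$|u(x)|\le C(n,M,\gamma,\Omega)\operatorname{dist}^{\frac{2+\gamma}{n}}(x,\partial\Omega)\quad\text{for all }x\in\Omega.$$
   Context: For a convex function $u$ on $\Omega$, its Monge–Ampère measure is $Mu(E)=|\partial u(E)|$ for Borel $E\subset\Omega$, where $\partial u(x)=\{p: u(y)\ge u(x)+p\cdot(y-x)\ \forall y\in\Omega\}$. $\det D^2u\le g$ in the sense of Aleksandrov means $Mu\le g\,dx$ as Borel measures. *)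

theory Defs
  imports "HOL-Analysis.Analysis"
begin

definition subdiff :: "('a::euclidean_space \<Rightarrow> real) \<Rightarrow> 'a set \<Rightarrow> 'a \<Rightarrow> 'a set" where
  "subdiff u \<Omega> x = {p. \<forall>y\<in>\<Omega>. u y \<ge> u x + p \<bullet> (y - x)}"

definition outer_lebesgue :: "'a::euclidean_space set \<Rightarrow> ennreal" where
  "outer_lebesgue S = (INF T \<in> {T \<in> sets lebesgue. S \<subseteq> T}. emeasure lebesgue T)"

definition monge_ampere :: "('a::euclidean_space \<Rightarrow> real) \<Rightarrow> 'a set \<Rightarrow> 'a set \<Rightarrow> ennreal" where
  "monge_ampere u \<Omega> E = outer_lebesgue (\<Union>x\<in>E. subdiff u \<Omega> x)"

definition aleksandrov_det_le :: "('a::euclidean_space \<Rightarrow> real) \<Rightarrow> 'a set \<Rightarrow> ('a \<Rightarrow> real) \<Rightarrow> bool" where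
  "aleksandrov_det_le u \<Omega> g \<longleftrightarrow>
     (\<forall>E \<in> sets borel. E \<subseteq> \<Omega> \<longrightarrow>
        monge_ampere u \<Omega> E \<le> (\<integral>\<^sup>+ x \<in> E. ennreal (g x) \<partial>lebesgue))"

end

theory Submission
  imports Defs
begin



lemma outer_ge:
  assumes "S \<in> sets lebesgue" "S \<subseteq> U"
  shows "emeasure lebesgue S \<le> outer_lebesgue U"
  unfolding outer_lebesgue_def
proof (rule INF_greatest)
  fix T assume "T \<in> {T \<in> sets lebesgue. U \<subseteq> T}"
  then show "emeasure lebesgue S \<le> emeasure lebesgue T"
    using assms(2) by (intro emeasure_mono) auto
qed

lemma convex_on_closure_cont:
  fixes u :: "'a::euclidean_space \<Rightarrow> real"
  assumes cvx: "convex \<Omega>" and cu: "convex_on \<Omega> u" and cont: "continuous_on (closure \<Omega>) u"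
  shows "convex_on (closure \<Omega>) u"
proof (rule convex_onI)
  show "convex (closure \<Omega>)" using cvx by (rule convex_closure)
  fix t :: real and x y assume t: "0 < t" "t < 1" and x: "x \<in> closure \<Omega>" and y: "y \<in> closure \<Omega>"
  obtain xs where xs: "\<And>n. xs n \<in> \<Omega>" "xs \<longlonglongrightarrow> x" using x closure_sequential by metis
  obtain ys where ys: "\<And>n. ys n \<in> \<Omega>" "ys \<longlonglongrightarrow> y" using y closure_sequential by metis
  let ?c = "\<lambda>n. (1 - t) *\<^sub>R xs n + t *\<^sub>R ys n"
  have cin: "?c n \<in> \<Omega>" for n using t by (intro convexD[OF cvx] xs(1) ys(1)) auto
  have climit: "?c \<longlonglongrightarrow> (1 - t) *\<^sub>R x + t *\<^sub>R y"
    by (intro tendsto_intros xs ys)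
  have cmem: "(1 - t) *\<^sub>R x + t *\<^sub>R y \<in> closure \<Omega>"
    using t by (intro convexD[OF convex_closure[OF cvx]] x y) auto
  have sub: "\<Omega> \<subseteq> closure \<Omega>" by (rule closure_subset)
  have l1: "(\<lambda>n. u (?c n)) \<longlonglongrightarrow> u ((1 - t) *\<^sub>R x + t *\<^sub>R y)"
  proof -
    have cc: "\<forall>n. ?c n \<in> closure \<Omega>" using cin sub by blast
    show ?thesis
      using continuous_on_sequentially[THEN iffD1, OF cont, rule_format, OF cmem conjI[OF cc climit]]
      by (simp add: comp_def)
  qed
  have l2: "(\<lambda>n. (1 - t) * u (xs n) + t * u (ys n)) \<longlonglongrightarrow> (1 - t) * u x + t * u y"
  proof -
    have "(\<lambda>n. u (xs n)) \<longlonglongrightarrow> u x"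
      using cont xs sub x unfolding continuous_on_sequentially by (auto simp: comp_def)
    moreover have "(\<lambda>n. u (ys n)) \<longlonglongrightarrow> u y"
      using cont ys sub y unfolding continuous_on_sequentially by (auto simp: comp_def)
    ultimately show ?thesis by (intro tendsto_intros)
  qed
  have "\<And>n. u (?c n) \<le> (1 - t) * u (xs n) + t * u (ys n)"
    using cu xs(1) ys(1) t unfolding convex_on_def by auto
  then show "u ((1 - t) *\<^sub>R x + t *\<^sub>R y) \<le> (1 - t) * u x + t * u y"
    using LIMSEQ_le[OF l1 l2] by auto
qed



lemma support_normal:
  fixes \<Omega> :: "'a::euclidean_space set"
  assumes "open \<Omega>" "convex \<Omega>" "z \<notin> \<Omega>"
  obtains \<nu> where "norm \<nu> = 1" "\<And>y. y \<in> \<Omega> \<Longrightarrow> \<nu> \<bullet> (y - z) > 0"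
proof -
  have "convex ((\<lambda>y. y - z) ` \<Omega>)" using assms(2) by (simp add: convex_translation_subtract)
  moreover have "0 \<notin> (\<lambda>y. y - z) ` \<Omega>" using assms(3) by auto
  ultimately have "\<exists>a. a \<noteq> 0 \<and> (\<forall>x\<in>(\<lambda>y. y - z) ` \<Omega>. 0 \<le> a \<bullet> x)"
    by (rule separating_hyperplane_set_0)
  then obtain a where a: "a \<noteq> 0" "\<And>x. x \<in> (\<lambda>y. y - z) ` \<Omega> \<Longrightarrow> 0 \<le> a \<bullet> x"
    by blast
  define \<nu> where "\<nu> = a /\<^sub>R norm a"
  have n1: "norm \<nu> = 1" using a(1) by (simp add: \<nu>_def)
  have ge: "\<nu> \<bullet> (y - z) \<ge> 0" if "y \<in> \<Omega>" for y
  proof -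
    have "0 \<le> a \<bullet> (y - z)" using a(2) that by blast
    then show ?thesis by (simp add: \<nu>_def inner_scaleR_left)
  qed
  show ?thesis
  proof (rule that[OF n1])
    fix y assume y: "y \<in> \<Omega>"
    obtain e where e: "e > 0" "ball y e \<subseteq> \<Omega>" using assms(1) y open_contains_ball by blast
    have "y - (e/2) *\<^sub>R \<nu> \<in> ball y e" using e n1 by (simp add: dist_norm)
    then have "y - (e/2) *\<^sub>R \<nu> \<in> \<Omega>" using e by blast
    then have "\<nu> \<bullet> (y - (e/2) *\<^sub>R \<nu> - z) \<ge> 0" by (rule ge)
    moreover have "\<nu> \<bullet> (y - (e/2) *\<^sub>R \<nu> - z) = \<nu> \<bullet> (y - z) - e/2"
    proof -
      have "\<nu> \<bullet> \<nu> = 1" using n1 by (simp add: norm_eq_1)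
      then show ?thesis by (simp add: inner_diff_right inner_scaleR_right)
    qed
    ultimately show "\<nu> \<bullet> (y - z) > 0" using e by linarith
  qed
qed


lemma infdist_le_normal:
  fixes \<Omega> :: "'a::euclidean_space set"
  assumes "norm \<nu> = 1" "\<And>y. y \<in> \<Omega> \<Longrightarrow> \<nu> \<bullet> (y - z) > 0" "y \<in> \<Omega>"
  shows "infdist y (frontier \<Omega>) \<le> \<nu> \<bullet> (y - z)"
proof -
  define w where "w = y - (\<nu> \<bullet> (y - z)) *\<^sub>R \<nu>"
  have "\<nu> \<bullet> (w - z) = 0"
    using assms(1) by (simp add: w_def inner_diff_right algebra_simps dot_square_norm power2_eq_square)
  then have wn: "w \<notin> \<Omega>" using assms(2) by force
  have "closed_segment y w \<inter> frontier \<Omega> \<noteq> {}"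
    by (rule connected_Int_frontier) (use assms(3) wn in auto)
  then obtain p where p: "p \<in> closed_segment y w" "p \<in> frontier \<Omega>" by blast
  have "dist y p \<le> dist y w" using dist_in_closed_segment[OF p(1)] by (simp add: dist_commute)
  also have "dist y w = \<nu> \<bullet> (y - z)"
    using assms(1) assms(2)[OF assms(3)] by (simp add: w_def dist_norm)
  finally show ?thesis by (rule infdist_le2[OF p(2)])
qed


lemma u_nonpos:
  fixes \<Omega> :: "'a::euclidean_space set" and u :: "'a \<Rightarrow> real"
  assumes "open \<Omega>" "convex \<Omega>" "bounded \<Omega>" "convex_on \<Omega> u" "continuous_on (closure \<Omega>) u"
    "\<forall>x\<in>frontier \<Omega>. u x = 0" "x0 \<in> \<Omega>" "z \<in> frontier \<Omega>"
  shows "u x0 \<le> 0"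
proof -
  have cc: "convex_on (closure \<Omega>) u" using convex_on_closure_cont assms(2,4,5) by blast
  have zn: "z \<notin> \<Omega>" using assms(1,8) by (simp add: frontier_def interior_open)
  have l: "x0 - z \<noteq> 0" using zn assms(7) by auto
  have ri: "x0 \<in> rel_interior \<Omega>" using assms(1,7) by (simp add: rel_interior_open)
  have ah: "x0 + (x0 - z) \<in> affine hull \<Omega>" using assms(1,7) affine_hull_open by blast
  obtain e where e: "0 < e" "x0 + e *\<^sub>R (x0 - z) \<in> rel_frontier \<Omega>"
    using ray_to_rel_frontier[OF assms(3) ri ah l] by blast
  define w where "w = x0 + e *\<^sub>R (x0 - z)"
  have wf: "w \<in> frontier \<Omega>" using e(2) assms(1) by (simp add: w_def rel_frontier_def frontier_def rel_interior_open interior_open)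
  have fc: "frontier \<Omega> \<subseteq> closure \<Omega>" by (simp add: frontier_def)
  have x0eq: "x0 = (1 - e/(1+e)) *\<^sub>R w + (e/(1+e)) *\<^sub>R z"
  proof -
    have w2: "w + e *\<^sub>R z = (1+e) *\<^sub>R x0" by (simp add: w_def algebra_simps)
    have "x0 = (1/(1+e)) *\<^sub>R ((1+e) *\<^sub>R x0)" using e(1) by simp
    also have "\<dots> = (1/(1+e)) *\<^sub>R (w + e *\<^sub>R z)" by (simp only: w2)
    also have "\<dots> = (1/(1+e)) *\<^sub>R w + (e/(1+e)) *\<^sub>R z" by (simp add: scaleR_add_right)
    also have "1/(1+e) = 1 - e/(1+e)" using e(1) by (simp add: field_simps)
    finally show ?thesis .
  qed
  have t0: "e/(1+e) \<ge> 0" "e/(1+e) \<le> 1" using e(1) by (auto simp: field_simps)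
  have wc: "w \<in> closure \<Omega>" "z \<in> closure \<Omega>" using wf assms(8) fc by blast+
  have "u x0 \<le> (1 - e/(1+e)) * u w + (e/(1+e)) * u z"
    using convex_onD[OF cc t0 wc] x0eq by simp
  also have "\<dots> = 0" using assms(6) wf assms(8) by simp
  finally show ?thesis .
qed





lemma ball_emeasure:
  fixes c :: "'a::euclidean_space"
  assumes "r \<ge> 0"
  shows "emeasure lebesgue (ball c r) = ennreal (r ^ DIM('a) * measure lborel (ball (0::'a) 1))"
proof -
  have "emeasure lebesgue (ball c r) = ennreal (measure lborel (ball c r))"
    using emeasure_lborel_ball_finite[of c r] by (subst emeasure_eq_ennreal_measure) auto
  then show ?thesis using content_ball_conv_unit_ball[OF assms, of c] by simp
qed

lemma ball_measure:
  fixes c :: "'a::euclidean_space"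
  assumes "r \<ge> 0"
  shows "measure lebesgue (ball c r) = r ^ DIM('a) * measure lborel (ball (0::'a) 1)"
proof -
  have "measure lebesgue (ball c r) = enn2real (emeasure lebesgue (ball c r))"
    by (simp add: measure_def)
  also have "\<dots> = r ^ DIM('a) * measure lborel (ball (0::'a) 1)"
    using ball_emeasure[OF assms, of c] assms by simp
  finally show ?thesis .
qed

lemma balls_lower:
  fixes \<nu> :: "'a::euclidean_space"
  assumes "norm \<nu> = 1" "r > 0" "(\<Union>k<N. ball (- (\<alpha> + 2 * real k * r) *\<^sub>R \<nu>) r) \<subseteq> U"
  shows "ennreal (real N * r ^ DIM('a) * measure lborel (ball (0::'a) 1)) \<le> outer_lebesgue U"
proof -
  let ?B = "\<lambda>k. ball (- (\<alpha> + 2 * real k * r) *\<^sub>R \<nu>) r"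
  have disj: "disjoint_family_on ?B {..<N}"
    unfolding disjoint_family_on_def
  proof (intro ballI impI)
    fix j k assume "j \<in> {..<N}" "k \<in> {..<N}" "j \<noteq> k"
    show "?B j \<inter> ?B k = {}"
    proof (rule ccontr)
      assume "?B j \<inter> ?B k \<noteq> {}"
      then obtain x where x: "x \<in> ?B j" "x \<in> ?B k" by blast
      have "dist (- (\<alpha> + 2 * real j * r) *\<^sub>R \<nu>) (- (\<alpha> + 2 * real k * r) *\<^sub>R \<nu>) < 2 * r"
      proof -
        have "dist (- (\<alpha> + 2 * real j * r) *\<^sub>R \<nu>) x < r" "dist (- (\<alpha> + 2 * real k * r) *\<^sub>R \<nu>) x < r"
          using x by (simp_all only: mem_ball)
        then show ?thesis using dist_triangle[of "- (\<alpha> + 2 * real j * r) *\<^sub>R \<nu>" "- (\<alpha> + 2 * real k * r) *\<^sub>R \<nu>" x]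
          by (simp add: dist_commute)
      qed
      moreover have "dist (- (\<alpha> + 2 * real j * r) *\<^sub>R \<nu>) (- (\<alpha> + 2 * real k * r) *\<^sub>R \<nu>)
          = 2 * r * \<bar>real j - real k\<bar>"
      proof -
        have "(- (\<alpha> + 2 * real j * r) *\<^sub>R \<nu>) - (- (\<alpha> + 2 * real k * r) *\<^sub>R \<nu>)
              = (2 * r * (real k - real j)) *\<^sub>R \<nu>" by (simp add: algebra_simps)
        then show ?thesis using assms(1,2) by (simp add: dist_norm abs_mult abs_minus_commute)
      qed
      moreover have "\<bar>real j - real k\<bar> \<ge> 1" using \<open>j \<noteq> k\<close> by linarith
      ultimately show False using assms(2) by (smt (verit) mult_le_cancel_left1)
    qed
  qed
  have "(\<Sum>k<N. emeasure lebesgue (?B k)) = emeasure lebesgue (\<Union>k<N. ?B k)"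
    by (rule sum_emeasure) (use disj in auto)
  moreover have "(\<Sum>k<N. emeasure lebesgue (?B k)) = ennreal (real N * r ^ DIM('a) * measure lborel (ball (0::'a) 1))"
  proof -
    have "(\<Sum>k<N. emeasure lebesgue (?B k)) = (\<Sum>k<N. ennreal (r ^ DIM('a) * measure lborel (ball (0::'a) 1)))"
    proof (rule sum.cong)
      fix k assume "k \<in> {..<N}"
      show "emeasure lebesgue (?B k) = ennreal (r ^ DIM('a) * measure lborel (ball (0::'a) 1))"
        using ball_emeasure[of r "- (\<alpha> + 2 * real k * r) *\<^sub>R \<nu>"] assms(2) by simp
    qed simp
    also have "\<dots> = of_nat N * ennreal (r ^ DIM('a) * measure lborel (ball (0::'a) 1))"
      by simp
    also have "\<dots> = ennreal (real N * r ^ DIM('a) * measure lborel (ball (0::'a) 1))"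
      by (simp add: ennreal_mult' ennreal_of_nat_eq_real_of_nat mult.assoc)
    finally show ?thesis .
  qed
  moreover have "emeasure lebesgue (\<Union>k<N. ?B k) \<le> outer_lebesgue U"
    by (rule outer_ge) (use assms(3) in auto)
  ultimately show ?thesis by simp
qed




lemma slab_open: "open {y::'a::euclidean_space. 0 < \<nu> \<bullet> (y - z) \<and> \<nu> \<bullet> (y - z) < T \<and> norm (y - z) < R}"
  by (intro open_Collect_conj open_Collect_less continuous_intros)

lemma slab_lmeasurable: "{y::'a::euclidean_space. 0 < \<nu> \<bullet> (y - z) \<and> \<nu> \<bullet> (y - z) < T \<and> norm (y - z) < R} \<in> lmeasurable"
proof (rule lmeasurable_open[OF _ slab_open])
  have "{y::'a. 0 < \<nu> \<bullet> (y - z) \<and> \<nu> \<bullet> (y - z) < T \<and> norm (y - z) < R} \<subseteq> ball z R"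
    by (auto simp: dist_norm norm_minus_commute)
  then show "bounded {y::'a. 0 < \<nu> \<bullet> (y - z) \<and> \<nu> \<bullet> (y - z) < T \<and> norm (y - z) < R}"
    using bounded_ball bounded_subset by blast
qed

lemma slab_measure:
  fixes \<nu> z :: "'a::euclidean_space"
  assumes nu: "norm \<nu> = 1" and T: "T > 0" and R: "R > 0"
  shows "measure lebesgue {y. 0 < \<nu> \<bullet> (y - z) \<and> \<nu> \<bullet> (y - z) < T \<and> norm (y - z) < R}
         \<le> 2 ^ (DIM('a) + 1) * R ^ (DIM('a) - 1) * T * measure lborel (ball (0::'a) 1)"
proof -
  define S where "S = {y. 0 < \<nu> \<bullet> (y - z) \<and> \<nu> \<bullet> (y - z) < T \<and> norm (y - z) < R}"
  define \<omega> where "\<omega> = measure lborel (ball (0::'a) 1)"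
  define n where "n = DIM('a)"
  have \<omega>: "\<omega> > 0" unfolding \<omega>_def using content_ball_pos[of 1 "0::'a"] by simp
  have n1: "n \<ge> 1" unfolding n_def using DIM_positive by (simp add: Suc_le_eq)
  have Rn: "R ^ n = R * R ^ (n - 1)" using n1 by (metis power_eq_if not_one_le_zero)
  have Sm: "S \<in> lmeasurable" unfolding S_def by (rule slab_lmeasurable)
  have Ssub: "S \<subseteq> ball z R" by (auto simp: S_def dist_norm norm_minus_commute)
  show ?thesis
  proof (cases "R \<le> 2 * T")
    case True
    have "measure lebesgue S \<le> measure lebesgue (ball z R)"
      by (rule measure_mono_fmeasurable[OF Ssub]) (use Sm in auto)
    also have "\<dots> = R ^ n * \<omega>" using ball_measure[of R z] R by (simp add: n_def \<omega>_def)
    also have "\<dots> = R * R ^ (n - 1) * \<omega>" by (simp add: Rn)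
    also have "\<dots> \<le> (2 * T) * R ^ (n - 1) * \<omega>"
      using True \<omega> R by (intro mult_right_mono) auto
    also have "\<dots> \<le> 2 ^ (n + 1) * R ^ (n - 1) * T * \<omega>"
    proof -
      have "(2::real) \<le> 2 ^ (n + 1)"
        using n1 by (metis add_le_cancel_right le_add2 one_add_one power_increasing power_one_right one_le_numeral Suc_eq_plus1 le_SucI)
      then show ?thesis using T R \<omega> by (intro mult_right_mono) auto
    qed
    finally show ?thesis by (simp add: S_def n_def \<omega>_def)
  next
    case False
    define N where "N = nat \<lfloor>R / T\<rfloor>"
    have RT: "R / T > 2" using False T by (simp add: field_simps)
    have N1: "real N \<ge> R / (2 * T)" and N2: "real N * T \<le> R"
    proof -
      have "real N = of_int \<lfloor>R / T\<rfloor>" using RT by (simp add: N_def)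
      moreover have "R / T - 1 < of_int \<lfloor>R / T\<rfloor>" "of_int \<lfloor>R / T\<rfloor> \<le> R / T" by linarith+
      moreover have "R / T - 1 \<ge> R / (2 * T)" using RT T by (simp add: field_simps)
      ultimately have a: "real N \<ge> R / (2 * T)" and b: "real N \<le> R / T" by linarith+
      show "real N \<ge> R / (2 * T)" by (rule a)
      have "real N * T \<le> R / T * T" using b T by (intro mult_right_mono) auto
      then show "real N * T \<le> R" using T by simp
    qed
    define Sk where "Sk k = (\<lambda>y. (real k * T) *\<^sub>R \<nu> + y) ` S" for k
    have Skm: "Sk k \<in> lmeasurable" for k unfolding Sk_def by (rule measurable_translation[OF Sm])
    have Skmeas: "measure lebesgue (Sk k) = measure lebesgue S" for k
      unfolding Sk_def by (rule measure_translation)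
    have nuk: "\<nu> \<bullet> (y - z) > real k * T \<and> \<nu> \<bullet> (y - z) < (real k + 1) * T" if yS: "y \<in> Sk k" for y k
    proof -
      obtain s where s: "s \<in> S" "y = (real k * T) *\<^sub>R \<nu> + s" using yS unfolding Sk_def by blast
      have "\<nu> \<bullet> \<nu> = 1" using nu by (simp add: norm_eq_1)
      then have "\<nu> \<bullet> (y - z) = real k * T + \<nu> \<bullet> (s - z)"
        using s(2) by (simp add: inner_diff_right inner_add_right)
      then show ?thesis using s(1) by (auto simp: S_def algebra_simps)
    qed
    have disj: "disjoint_family_on Sk {..<N}"
      unfolding disjoint_family_on_def
    proof (intro ballI impI)
      fix j k assume jk: "j \<in> {..<N}" "k \<in> {..<N}" "j \<noteq> k"
      show "Sk j \<inter> Sk k = {}"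
      proof (rule ccontr)
        assume "Sk j \<inter> Sk k \<noteq> {}"
        then obtain y where y: "y \<in> Sk j" "y \<in> Sk k" by blast
        have "real j * T < (real k + 1) * T" "real k * T < (real j + 1) * T"
          using nuk[OF y(1)] nuk[OF y(2)] by linarith+
        then have "real j < real k + 1" "real k < real j + 1" using T by (simp_all add: mult_less_cancel_right)
        then show False using jk(3) by linarith
      qed
    qed
    have Usub: "(\<Union>k<N. Sk k) \<subseteq> ball z (2 * R)"
    proof
      fix y assume "y \<in> (\<Union>k<N. Sk k)"
      then obtain k s where ks: "k < N" "s \<in> S" "y = (real k * T) *\<^sub>R \<nu> + s" unfolding Sk_def by blast
      have "norm (y - z) \<le> norm ((real k * T) *\<^sub>R \<nu>) + norm (s - z)"
        using ks(3) norm_triangle_ineq[of "(real k * T) *\<^sub>R \<nu>" "s - z"] by (simp add: algebra_simps)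
      also have "norm ((real k * T) *\<^sub>R \<nu>) = real k * T" using nu T by simp
      also have "real k * T \<le> real N * T" using ks(1) T by simp
      finally have "norm (y - z) < real N * T + R" using ks(2) by (simp add: S_def)
      then show "y \<in> ball z (2 * R)" using N2 by (simp add: dist_norm norm_minus_commute)
    qed
    have Um: "(\<Union>k<N. Sk k) \<in> lmeasurable" using Skm by (intro fmeasurable.finite_UN) auto
    have "measure lebesgue (\<Union>k<N. Sk k) = (\<Sum>k<N. measure lebesgue (Sk k))"
    proof (rule measure_finite_Union)
      show "Sk ` {..<N} \<subseteq> sets lebesgue"
      proof (rule image_subsetI)
        fix i show "Sk i \<in> sets lebesgue" by (rule fmeasurableD[OF Skm])
      qed
      fix i show "emeasure lebesgue (Sk i) \<noteq> \<infinity>" using fmeasurableD2[OF Skm[of i]] by simp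
    qed (use disj in auto)
    also have "\<dots> = real N * measure lebesgue S" by (simp add: Skmeas)
    finally have eq: "measure lebesgue (\<Union>k<N. Sk k) = real N * measure lebesgue S" .
    have "real N * measure lebesgue S \<le> measure lebesgue (ball z (2 * R))"
      unfolding eq[symmetric] by (rule measure_mono_fmeasurable[OF Usub]) (use Um in auto)
    also have "\<dots> = (2 * R) ^ n * \<omega>" using ball_measure[of "2*R" z] R by (simp add: n_def \<omega>_def)
    finally have A: "real N * measure lebesgue S \<le> (2 * R) ^ n * \<omega>" .
    have mS: "measure lebesgue S \<ge> 0" by simp
    have "R / (2 * T) * measure lebesgue S \<le> real N * measure lebesgue S"
      using N1 mS by (rule mult_right_mono)
    with A have B: "R / (2 * T) * measure lebesgue S \<le> (2 * R) ^ n * \<omega>" by linarith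
    have "measure lebesgue S \<le> (2 * T / R) * ((2 * R) ^ n * \<omega>)"
    proof -
      have "measure lebesgue S = (2 * T / R) * (R / (2 * T) * measure lebesgue S)"
        using T R by (simp add: field_simps)
      also have "\<dots> \<le> (2 * T / R) * ((2 * R) ^ n * \<omega>)"
        using B T R by (intro mult_left_mono) auto
      finally show ?thesis .
    qed
    also have "\<dots> = 2 ^ (n + 1) * R ^ (n - 1) * T * \<omega>"
    proof -
      have "(2 * R) ^ n = 2 ^ n * (R * R ^ (n - 1))" by (simp add: power_mult_distrib Rn)
      then show ?thesis using R by (simp add: field_simps)
    qed
    finally show ?thesis by (simp add: S_def n_def \<omega>_def)
  qed
qed




lemma powr_root_le:
  fixes h X n :: real
  assumes "h > 0" "n > 0" "h powr n \<le> X"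
  shows "h \<le> X powr (1 / n)"
proof -
  have "h = (h powr n) powr (1/n)" using assms by (simp add: powr_powr)
  also have "\<dots> \<le> X powr (1/n)" using assms by (intro powr_mono2) auto
  finally show ?thesis .
qed

lemma alg_case1:
  fixes n \<gamma> K0 h D :: real
  assumes "n > 0" "\<gamma> \<ge> 0" "K0 > 0" "h > 0" "D > 0"
    "h powr n \<le> K0 * D * (4 * D) powr (1 + \<gamma>)"
  shows "h \<le> (K0 * 4 powr (1 + \<gamma>)) powr (1 / n) * D powr ((2 + \<gamma>) / n)"
proof -
  have eqK: "K0 * D * (4 * D) powr (1 + \<gamma>) = (K0 * 4 powr (1 + \<gamma>)) * D powr (2 + \<gamma>)"
  proof -
    have "(4 * D) powr (1 + \<gamma>) = 4 powr (1 + \<gamma>) * D powr (1 + \<gamma>)" using assms by (simp add: powr_mult)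
    moreover have "D powr (2 + \<gamma>) = D * D powr (1 + \<gamma>)"
    proof -
      have "D powr (2 + \<gamma>) = D powr (1 + (1 + \<gamma>))" by simp
      also have "\<dots> = D powr 1 * D powr (1 + \<gamma>)" by (rule powr_add)
      finally show ?thesis using assms(5) by simp
    qed
    ultimately show ?thesis by simp
  qed
  have "h powr n \<le> (K0 * 4 powr (1 + \<gamma>)) * D powr (2 + \<gamma>)"
    using assms(6)[unfolded eqK] .
  then have "h \<le> ((K0 * 4 powr (1 + \<gamma>)) * D powr (2 + \<gamma>)) powr (1 / n)"
    by (rule powr_root_le[OF assms(4,1)])
  also have "\<dots> = (K0 * 4 powr (1 + \<gamma>)) powr (1 / n) * D powr ((2 + \<gamma>) / n)"
    using assms by (simp add: powr_mult powr_powr)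
  finally show ?thesis .
qed

lemma alg_case2:
  fixes n \<gamma> K0 h D A a b :: real
  assumes "n > 0" "\<gamma> \<ge> 0" "K0 > 0" "h > 0" "D > 0" "A > 0"
    "a = (2 + \<gamma>) / n" "a < 1" "b = (1 + \<gamma>) / (1 - a)"
    "h powr n \<le> K0 * D * ((8 * D * A / h) powr (1 / (1 - a))) powr (1 + \<gamma>)"
  shows "h \<le> (K0 * 8 powr b) powr (1 / (n + b)) * A powr (b / (n + b)) * D powr a"
proof -
  have b0: "b > 0" using assms by simp
  have e1: "((8 * D * A / h) powr (1 / (1 - a))) powr (1 + \<gamma>) = (8 * D * A / h) powr b"
    using assms by (simp add: powr_powr)
  also have "\<dots> = 8 powr b * A powr b * D powr b / h powr b"
    using assms by (simp add: powr_divide powr_mult)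
  finally have "h powr n \<le> K0 * D * (8 powr b * A powr b * D powr b / h powr b)"
    using assms(10) by simp
  then have "h powr n * h powr b \<le> K0 * D * (8 powr b * A powr b * D powr b / h powr b) * h powr b"
    by (intro mult_right_mono) auto
  also have "\<dots> = K0 * D * (8 powr b * A powr b * D powr b)"
    using assms(4) by simp
  also have "\<dots> = (K0 * 8 powr b) * A powr b * (D powr 1 * D powr b)"
    using assms(5) by simp
  also have "D powr 1 * D powr b = D powr (1 + b)" by (rule powr_add[symmetric])
  finally have "h powr (n + b) \<le> (K0 * 8 powr b) * A powr b * D powr (1 + b)"
    by (simp add: powr_add)
  then have "h \<le> ((K0 * 8 powr b) * A powr b * D powr (1 + b)) powr (1 / (n + b))"
    using powr_root_le[OF assms(4)] b0 assms(1) by simp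
  also have "\<dots> = (K0 * 8 powr b) powr (1 / (n + b)) * A powr (b / (n + b)) * D powr ((1 + b) / (n + b))"
    using assms by (simp add: powr_mult powr_powr)
  also have "(1 + b) / (n + b) = a"
  proof -
    have "1 - a \<noteq> 0" using assms by simp
    have nb: "n + b \<noteq> 0" using b0 assms(1) by simp
    have "b * (1 - a) = 1 + \<gamma>" using assms by simp
    then have eq: "b * (n - (2 + \<gamma>)) = (1 + \<gamma>) * n" using assms(1,7) by (simp add: field_simps)
    have an: "a * n = 2 + \<gamma>" using assms(1,7) by simp
    have r1: "(a * (n + b)) * n = (a * n) * (n + b)" by (simp add: algebra_simps)
    have r2: "(2 + \<gamma>) * (n + b) = 2*n + 2*b + \<gamma>*n + \<gamma>*b" by (simp add: algebra_simps)
    have r3: "b * (n - (2 + \<gamma>)) = b*n - 2*b - \<gamma>*b" "(1 + \<gamma>) * n = n + \<gamma>*n" "(1 + b) * n = n + b*n"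
      by (simp_all add: algebra_simps)
    have "(1 + b) * n = (a * (n + b)) * n" unfolding r1 an r2 r3(3) using eq[unfolded r3(1,2)]
      by (simp add: algebra_simps)
    then have "1 + b = a * (n + b)" using assms(1) by simp
    then show ?thesis using nb by (simp add: field_simps)
  qed
  finally show ?thesis .
qed




lemma slope_point:
  fixes \<Omega> :: "'a::euclidean_space set" and u :: "'a \<Rightarrow> real"
  assumes op: "open \<Omega>" and bd: "bounded \<Omega>" and cont: "continuous_on (closure \<Omega>) u"
    and fr0: "\<forall>x\<in>frontier \<Omega>. u x = 0" and x0: "x0 \<in> \<Omega>"
    and good: "\<And>y. y \<in> closure \<Omega> \<Longrightarrow> p \<bullet> (y - x0) < - u x0"
  obtains x1 where "x1 \<in> \<Omega>" "p \<in> subdiff u \<Omega> x1" "\<And>y. y \<in> closure \<Omega> \<Longrightarrow> u y - p \<bullet> y \<ge> u x1 - p \<bullet> x1"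
proof -
  let ?g = "\<lambda>y. u y - p \<bullet> y"
  have cpt: "compact (closure \<Omega>)" using bd by (simp add: compact_eq_bounded_closed bounded_closure)
  have ne: "closure \<Omega> \<noteq> {}" using x0 closure_subset by blast
  have gc: "continuous_on (closure \<Omega>) ?g" by (intro continuous_intros cont)
  obtain x1 where x1: "x1 \<in> closure \<Omega>" "\<And>y. y \<in> closure \<Omega> \<Longrightarrow> ?g x1 \<le> ?g y"
    using continuous_attains_inf[OF cpt ne gc] by blast
  have x0c: "x0 \<in> closure \<Omega>" using x0 closure_subset by blast
  have x1O: "x1 \<in> \<Omega>"
  proof (rule ccontr)
    assume "x1 \<notin> \<Omega>"
    then have "x1 \<in> frontier \<Omega>" using x1(1) op by (simp add: frontier_def interior_open)
    then have "u x1 = 0" using fr0 by blast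
    moreover have "?g x1 \<le> ?g x0" using x1(2)[OF x0c] .
    moreover have "p \<bullet> (x1 - x0) < - u x0" using good[OF x1(1)] .
    ultimately show False by (simp add: inner_diff_right)
  qed
  have "p \<in> subdiff u \<Omega> x1"
    unfolding subdiff_def
  proof (intro CollectI ballI)
    fix y assume "y \<in> \<Omega>"
    then have "?g x1 \<le> ?g y" using x1(2) closure_subset by blast
    then show "u y \<ge> u x1 + p \<bullet> (y - x1)" by (simp add: inner_diff_right)
  qed
  then show ?thesis using that x1O x1(2) by blast
qed




lemma localize:
  fixes h dp D A a X \<delta> T :: real
  assumes h: "h > 0" and dp: "dp > 0" "dp + \<delta> \<le> D" and del: "\<delta> > 0" and A: "A \<ge> 0"
    and a: "0 < a" "a < 1" and X: "X > 0"
    and ineq: "h / (4 * dp) * X \<le> h / 2 + A * (X + \<delta>) powr a"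
    and T: "T = max (4 * D) ((8 * D * A / h) powr (1 / (1 - a)))"
  shows "X < T"
proof -
  define Y where "Y = X + \<delta>"
  have Y0: "Y > 0" using X del by (simp add: Y_def)
  have Ya: "Y powr a > 0" using Y0 by simp
  have "X \<le> 2 * dp + 4 * dp * A * Y powr a / h"
  proof -
    have "X = (4 * dp / h) * (h / (4 * dp) * X)" using h dp by (simp add: field_simps)
    also have "\<dots> \<le> (4 * dp / h) * (h / 2 + A * Y powr a)"
      using ineq h dp by (intro mult_left_mono) (auto simp: Y_def)
    also have "\<dots> = 2 * dp + 4 * dp * A * Y powr a / h" using h by (simp add: field_simps)
    finally show ?thesis .
  qed
  moreover have "4 * dp * A * Y powr a / h \<le> 4 * D * A * Y powr a / h"
    using dp del A Ya h by (intro divide_right_mono mult_right_mono) auto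
  ultimately have Yle: "Y \<le> 2 * D + 4 * D * A * Y powr a / h"
    using dp del by (simp add: Y_def)
  have "Y \<le> T"
  proof (rule ccontr)
    assume "\<not> Y \<le> T"
    then have YT: "Y > T" by simp
    then have Y4: "Y > 4 * D" using T by simp
    have "Y / 2 < 4 * D * A * Y powr a / h" using Yle Y4 by linarith
    then have "Y < (8 * D * A / h) * Y powr a" by (simp add: field_simps)
    then have "Y / Y powr a < 8 * D * A / h" using Ya by (simp add: field_simps)
    moreover have "Y / Y powr a = Y powr (1 - a)" using Y0 by (simp add: powr_diff)
    ultimately have lt: "Y powr (1 - a) < 8 * D * A / h" by simp
    have "Y = (Y powr (1 - a)) powr (1 / (1 - a))" using Y0 a by (simp add: powr_powr)
    also have "\<dots> < (8 * D * A / h) powr (1 / (1 - a))"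
      using lt a Y0 by (intro powr_less_mono2) auto
    also have "\<dots> \<le> T" using T by simp
    finally show False using YT by simp
  qed
  then show ?thesis using del by (simp add: Y_def)
qed




lemma core:
  fixes \<Omega> :: "'a::euclidean_space set" and u :: "'a \<Rightarrow> real"
  assumes op: "open \<Omega>" and cv: "convex \<Omega>" and bd: "bounded \<Omega>"
    and R: "R > 0" and Rb: "\<forall>x\<in>closure \<Omega>. \<forall>y\<in>closure \<Omega>. norm (x - y) < R"
    and cont: "continuous_on (closure \<Omega>) u" and fr0: "\<forall>x\<in>frontier \<Omega>. u x = 0"
    and al: "aleksandrov_det_le u \<Omega> (\<lambda>x. M * infdist x (frontier \<Omega>) powr \<gamma>)"
    and M: "M > 0" and g0: "0 \<le> \<gamma>" and g1: "\<gamma> < real DIM('a) - 2"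
    and nonpos: "\<forall>x\<in>\<Omega>. u x \<le> 0"
    and del: "\<delta> > 0" and A: "A \<ge> 0"
    and hypA: "\<forall>x\<in>\<Omega>. \<bar>u x\<bar> \<le> A * (infdist x (frontier \<Omega>) + \<delta>) powr ((2 + \<gamma>) / real DIM('a))"
    and x0: "x0 \<in> \<Omega>"
    and Fne: "frontier \<Omega> \<noteq> {}"
  shows "\<bar>u x0\<bar> \<le> max ((M * 2 ^ (2 * DIM('a) + 3) * R ^ (2 * DIM('a) - 2) * 4 powr (1 + \<gamma>)) powr (1 / real DIM('a)))
            ((M * 2 ^ (2 * DIM('a) + 3) * R ^ (2 * DIM('a) - 2) * 8 powr ((1 + \<gamma>) / (1 - (2 + \<gamma>) / real DIM('a))))
               powr (1 / (real DIM('a) + (1 + \<gamma>) / (1 - (2 + \<gamma>) / real DIM('a))))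
             * A powr (((1 + \<gamma>) / (1 - (2 + \<gamma>) / real DIM('a))) / (real DIM('a) + (1 + \<gamma>) / (1 - (2 + \<gamma>) / real DIM('a)))))
          * (infdist x0 (frontier \<Omega>) + \<delta>) powr ((2 + \<gamma>) / real DIM('a))"
proof -
  define n where "n = real DIM('a)"
  define a where "a = (2 + \<gamma>) / n"
  define b where "b = (1 + \<gamma>) / (1 - a)"
  define K0 where "K0 = M * 2 ^ (2 * DIM('a) + 3) * R ^ (2 * DIM('a) - 2)"
  define C1 where "C1 = (K0 * 4 powr (1 + \<gamma>)) powr (1 / n)"
  define C2 where "C2 = (K0 * 8 powr b) powr (1 / (n + b))"
  define F where "F = frontier \<Omega>"
  have n3: "n > 2 + \<gamma>" using g1 by (simp add: n_def)
  have n0: "n > 0" using n3 g0 by linarith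
  have a01: "0 < a" "a < 1" using n3 n0 g0 by (auto simp: a_def field_simps)
  have K0: "K0 > 0" using M R by (simp add: K0_def)
  have C1: "C1 \<ge> 0" by (simp add: C1_def)
  have Fc: "closed F" by (simp add: F_def)
  have x0F: "x0 \<notin> F" using x0 op by (simp add: F_def frontier_def interior_open)
  define d where "d = infdist x0 F"
  have d0: "d > 0" unfolding d_def using infdist_pos_not_in_closed[OF Fc _ x0F] Fne by (simp add: F_def)
  obtain z where z: "z \<in> F" "infdist x0 F = dist x0 z"
    using infdist_attains_inf[OF Fc] Fne unfolding F_def by blast
  have zn: "z \<notin> \<Omega>" using z(1) op by (simp add: F_def frontier_def interior_open)
  obtain \<nu> where nu: "norm \<nu> = 1" and pos: "\<And>y. y \<in> \<Omega> \<Longrightarrow> \<nu> \<bullet> (y - z) > 0"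
    using support_normal[OF op cv zn] by blast
  define dp where "dp = \<nu> \<bullet> (x0 - z)"
  have dp0: "dp > 0" using pos[OF x0] by (simp add: dp_def)
  have dpd: "dp \<le> d"
  proof -
    have "dp \<le> norm \<nu> * norm (x0 - z)" unfolding dp_def by (rule norm_cauchy_schwarz)
    then show ?thesis using nu z(2) by (simp add: d_def dist_norm)
  qed
  have clos: "\<nu> \<bullet> (y - z) \<ge> 0" if "y \<in> closure \<Omega>" for y
  proof -
    have "closure \<Omega> \<subseteq> {y. \<nu> \<bullet> (y - z) \<ge> 0}"
      by (rule closure_minimal) (use pos in \<open>auto intro!: closed_Collect_le continuous_intros simp: less_imp_le\<close>)
    then show ?thesis using that by blast
  qed
  have fcl: "frontier \<Omega> \<subseteq> closure \<Omega>" by (simp add: frontier_def)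
  define h where "h = - u x0"
  have hab: "\<bar>u x0\<bar> = h" using nonpos x0 by (simp add: h_def)
  define D where "D = d + \<delta>"
  have D0: "D > 0" using d0 del by (simp add: D_def)
  have goal_eq: "infdist x0 (frontier \<Omega>) + \<delta> = D" by (simp add: D_def d_def F_def)
  have RHS0: "0 \<le> max C1 (C2 * A powr (b / (n + b))) * D powr a"
    using C1 D0 by (intro mult_nonneg_nonneg) auto
  have main: "h \<le> max C1 (C2 * A powr (b / (n + b))) * D powr a"
  proof (cases "h = 0")
    case True then show ?thesis using RHS0 by simp
  next
    case False
    have "u x0 \<le> 0" using nonpos x0 by blast
    then have h0: "h > 0" using False by (simp add: h_def)
    define r where "r = h / (2 * R)"
    define \<alpha> where "\<alpha> = h / (4 * dp)"
    define N where "N = nat \<lfloor>R / (4 * dp)\<rfloor> + 1"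
    define T where "T = max (4 * D) ((8 * D * A / h) powr (1 / (1 - a)))"
    define E where "E = {y \<in> \<Omega>. \<nu> \<bullet> (y - z) < T}"
    have r0: "r > 0" using h0 R by (simp add: r_def)
    have rR: "r * R = h / 2" using R by (simp add: r_def)
    have T0: "T > 0" using D0 by (simp add: T_def)
    have Nle: "real (N - 1) \<le> R / (4 * dp)"
    proof -
      have "R / (4 * dp) \<ge> 0" using R dp0 by simp
      then show ?thesis by (simp add: N_def)
    qed
    have NR: "real N \<ge> R / (4 * dp)"
    proof -
      have "R / (4 * dp) \<ge> 0" using R dp0 by simp
      then have "real (nat \<lfloor>R / (4 * dp)\<rfloor>) > R / (4 * dp) - 1" by linarith
      then show ?thesis by (simp add: N_def)
    qed
    have ballsub: "(\<Union>k<N. ball (- (\<alpha> + 2 * real k * r) *\<^sub>R \<nu>) r) \<subseteq> (\<Union>x\<in>E. subdiff u \<Omega> x)"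
    proof
      fix p assume "p \<in> (\<Union>k<N. ball (- (\<alpha> + 2 * real k * r) *\<^sub>R \<nu>) r)"
      then obtain k where k: "k < N" "p \<in> ball (- (\<alpha> + 2 * real k * r) *\<^sub>R \<nu>) r" by blast
      define c where "c = \<alpha> + 2 * real k * r"
      define w where "w = p + c *\<^sub>R \<nu>"
      have \<alpha>0: "\<alpha> > 0" using h0 dp0 by (simp add: \<alpha>_def)
      have c1: "c \<ge> \<alpha>" using r0 by (simp add: c_def)
      have c2: "c * dp \<le> h / 2"
      proof -
        have "real k \<le> real (N - 1)" using k(1) by simp
        then have kk: "real k \<le> R / (4 * dp)" using Nle by linarith
        have "2 * real k * r \<le> 2 * (R / (4 * dp)) * r" 
          using kk r0 by (intro mult_right_mono) auto
        also have "\<dots> = \<alpha>" using R dp0 by (simp add: r_def \<alpha>_def field_simps)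
        finally have "c \<le> 2 * \<alpha>" by (simp add: c_def)
        then have "c * dp \<le> 2 * \<alpha> * dp" using dp0 by (simp add: mult_right_mono)
        also have "\<dots> = h / 2" using dp0 by (simp add: \<alpha>_def)
        finally show ?thesis .
      qed
      have wr: "norm w < r"
      proof -
        have "(- c) *\<^sub>R \<nu> - p = - w" by (simp add: w_def)
        then have "norm w = dist (- c *\<^sub>R \<nu>) p" by (simp add: dist_norm)
        then show ?thesis using k(2) by (simp add: c_def)
      qed
      have pw: "p = w - c *\<^sub>R \<nu>" by (simp add: w_def)
      have wbound: "\<bar>w \<bullet> v\<bar> < h / 2" if "norm v < R" for v
      proof -
        have "\<bar>w \<bullet> v\<bar> \<le> norm w * norm v" by (rule Cauchy_Schwarz_ineq2)
        also have "\<dots> \<le> norm w * R" using that by (intro mult_left_mono) auto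
        also have "\<dots> < r * R" using wr R by (intro mult_strict_right_mono) auto
        finally show ?thesis using rR by simp
      qed
      have good: "p \<bullet> (y - x0) < - u x0" if y: "y \<in> closure \<Omega>" for y
      proof -
        have x0c: "x0 \<in> closure \<Omega>" using x0 closure_subset by blast
        have "\<nu> \<bullet> (y - x0) = \<nu> \<bullet> (y - z) - dp" by (simp add: dp_def inner_diff_right)
        then have "\<nu> \<bullet> (y - x0) \<ge> - dp" using clos[OF y] by simp
        then have "c * (- dp) \<le> c * (\<nu> \<bullet> (y - x0))" using c1 \<alpha>0 by (intro mult_left_mono) auto
        then have "- c * (\<nu> \<bullet> (y - x0)) \<le> c * dp" by simp
        moreover have "w \<bullet> (y - x0) < h / 2" using wbound[of "y - x0"] Rb y x0c by force
        moreover have "p \<bullet> (y - x0) = w \<bullet> (y - x0) - c * (\<nu> \<bullet> (y - x0))"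
          by (simp add: pw inner_diff_left)
        ultimately show ?thesis using c2 by (simp add: h_def)
      qed
      obtain x1 where x1: "x1 \<in> \<Omega>" "p \<in> subdiff u \<Omega> x1"
          "\<And>y. y \<in> closure \<Omega> \<Longrightarrow> u y - p \<bullet> y \<ge> u x1 - p \<bullet> x1"
        using slope_point[OF op bd cont fr0 x0 good] by blast
      define X where "X = \<nu> \<bullet> (x1 - z)"
      have X0: "X > 0" using pos[OF x1(1)] by (simp add: X_def)
      have zc: "z \<in> closure \<Omega>" using z(1) fcl by (simp add: F_def subsetD)
      have x1c: "x1 \<in> closure \<Omega>" using x1(1) closure_subset by blast
      have "u z - p \<bullet> z \<ge> u x1 - p \<bullet> x1" by (rule x1(3)[OF zc])
      moreover have "u z = 0" using fr0 z(1) by (simp add: F_def)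
      ultimately have m1: "- u x1 \<ge> p \<bullet> (z - x1)" by (simp add: inner_diff_right)
      have "p \<bullet> (z - x1) = w \<bullet> (z - x1) + c * X"
        by (simp add: pw X_def inner_diff_left inner_diff_right algebra_simps)
      moreover have "w \<bullet> (z - x1) > - (h / 2)" using wbound[of "z - x1"] Rb zc x1c by force
      moreover have "c * X \<ge> \<alpha> * X" using c1 X0 by (simp add: mult_right_mono)
      ultimately have m2: "- u x1 \<ge> \<alpha> * X - h / 2" using m1 by linarith
      have "- u x1 = \<bar>u x1\<bar>" using nonpos x1(1) by simp
      also have "\<dots> \<le> A * (infdist x1 (frontier \<Omega>) + \<delta>) powr a"
        using hypA x1(1) by (simp add: a_def n_def)
      also have "\<dots> \<le> A * (X + \<delta>) powr a"
      proof -
        have "infdist x1 (frontier \<Omega>) \<le> X" unfolding X_def by (rule infdist_le_normal[OF nu pos x1(1)])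
        then show ?thesis using A a01 del by (intro mult_left_mono powr_mono2) (auto intro: add_nonneg_nonneg infdist_nonneg)
      qed
      finally have m3: "h / (4 * dp) * X \<le> h / 2 + A * (X + \<delta>) powr a"
        using m2 by (simp add: \<alpha>_def)
      have "X < T"
        by (rule localize[OF h0 dp0 _ del A a01 X0 m3 T_def]) (use dpd in \<open>simp add: D_def\<close>)
      then have "x1 \<in> E" using x1(1) by (simp add: E_def X_def)
      then show "p \<in> (\<Union>x\<in>E. subdiff u \<Omega> x)" using x1(2) by blast
    qed
    define \<omega> where "\<omega> = measure lborel (ball (0::'a) 1)"
    have \<omega>0: "\<omega> > 0" unfolding \<omega>_def using content_ball_pos[of 1 "0::'a"] by simp
    have Eeq: "E = \<Omega> \<inter> {y. \<nu> \<bullet> (y - z) < T}" by (auto simp: E_def)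
    have Eopen: "open E" unfolding Eeq by (intro open_Int op open_Collect_less continuous_intros)
    have Esub: "E \<subseteq> \<Omega>" by (auto simp: E_def)
    have Eb: "E \<in> sets borel" using Eopen by (rule borel_open)
    have Eleb: "E \<in> sets lebesgue"
      using lmeasurable_open[OF bounded_subset[OF bd Esub] Eopen] by (rule fmeasurableD)
    define S where "S = {y. 0 < \<nu> \<bullet> (y - z) \<and> \<nu> \<bullet> (y - z) < T \<and> norm (y - z) < R}"
    have zc: "z \<in> closure \<Omega>" using z(1) fcl by (simp add: F_def subsetD)
    have ES: "E \<subseteq> S"
    proof
      fix y assume y: "y \<in> E"
      then have yO: "y \<in> \<Omega>" by (simp add: E_def)
      then have "y \<in> closure \<Omega>" using closure_subset by blast
      then have "norm (y - z) < R" using Rb zc by blast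
      then show "y \<in> S" using y pos[OF yO] by (simp add: S_def E_def)
    qed
    have Sm: "S \<in> lmeasurable" unfolding S_def by (rule slab_lmeasurable)
    have Smeas: "measure lebesgue S \<le> 2 ^ (DIM('a) + 1) * R ^ (DIM('a) - 1) * T * \<omega>"
      unfolding S_def \<omega>_def by (rule slab_measure[OF nu T0 R])
    have "ennreal (real N * r ^ DIM('a) * \<omega>) \<le> outer_lebesgue (\<Union>x\<in>E. subdiff u \<Omega> x)"
      unfolding \<omega>_def by (rule balls_lower[OF nu r0 ballsub])
    also have "\<dots> = monge_ampere u \<Omega> E" by (simp add: monge_ampere_def)
    also have "\<dots> \<le> (\<integral>\<^sup>+ x \<in> E. ennreal (M * infdist x (frontier \<Omega>) powr \<gamma>) \<partial>lebesgue)"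
      using al Eb Esub by (simp add: aleksandrov_det_le_def)
    also have "\<dots> \<le> (\<integral>\<^sup>+ x. ennreal (M * T powr \<gamma>) * indicator E x \<partial>lebesgue)"
    proof (rule nn_integral_mono)
      fix x
      show "ennreal (M * infdist x (frontier \<Omega>) powr \<gamma>) * indicator E x \<le> ennreal (M * T powr \<gamma>) * indicator E x"
      proof (cases "x \<in> E")
        case True
        then have xO: "x \<in> \<Omega>" by (simp add: E_def)
        have "infdist x (frontier \<Omega>) \<le> \<nu> \<bullet> (x - z)" by (rule infdist_le_normal[OF nu pos xO])
        also have "\<dots> < T" using True by (simp add: E_def)
        finally have "infdist x (frontier \<Omega>) powr \<gamma> \<le> T powr \<gamma>"
          using g0 by (intro powr_mono2) (auto intro: infdist_nonneg)
        then have "M * infdist x (frontier \<Omega>) powr \<gamma> \<le> M * T powr \<gamma>" using M by simp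
        then show ?thesis using True by (simp add: ennreal_leI)
      qed simp
    qed
    also have "\<dots> = ennreal (M * T powr \<gamma>) * emeasure lebesgue E"
      by (rule nn_integral_cmult_indicator[OF Eleb])
    also have "\<dots> \<le> ennreal (M * T powr \<gamma>) * ennreal (measure lebesgue S)"
    proof (rule mult_left_mono)
      have "emeasure lebesgue E \<le> emeasure lebesgue S" using ES Sm by (intro emeasure_mono) auto
      also have "\<dots> = ennreal (measure lebesgue S)" using Sm by (rule emeasure_eq_measure2)
      finally show "emeasure lebesgue E \<le> ennreal (measure lebesgue S)" .
    qed simp
    also have "\<dots> \<le> ennreal (M * T powr \<gamma>) * ennreal (2 ^ (DIM('a) + 1) * R ^ (DIM('a) - 1) * T * \<omega>)"
      using Smeas by (intro mult_left_mono ennreal_leI) auto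
    also have "\<dots> = ennreal (M * T powr \<gamma> * (2 ^ (DIM('a) + 1) * R ^ (DIM('a) - 1) * T * \<omega>))"
      using M by (simp add: ennreal_mult')
    finally have big: "real N * r ^ DIM('a) * \<omega> \<le> M * T powr \<gamma> * (2 ^ (DIM('a) + 1) * R ^ (DIM('a) - 1) * T * \<omega>)"
      using M T0 R \<omega>0 by (subst (asm) ennreal_le_iff) auto
    then have big2: "real N * r ^ DIM('a) \<le> M * T powr \<gamma> * 2 ^ (DIM('a) + 1) * R ^ (DIM('a) - 1) * T"
      using \<omega>0 by (simp add: mult.assoc mult.left_commute[of \<omega>])
    have hpow: "h powr n \<le> K0 * D * T powr (1 + \<gamma>)"
    proof -
      define m where "m = DIM('a)"
      have m1: "m \<ge> 1" unfolding m_def using DIM_positive by (simp add: Suc_le_eq)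
      have Rm: "R ^ m = R * R ^ (m - 1)" using m1 by (metis power_eq_if not_one_le_zero)
      have hm: "h powr n = h ^ m" using h0 by (simp add: n_def m_def powr_realpow)
      have rm: "r ^ m = h ^ m / (2 ^ m * R ^ m)" by (simp add: r_def power_divide power_mult_distrib)
      have key: "h ^ m = (4 * dp * 2 ^ m * R ^ (m - 1)) * (R / (4 * dp) * r ^ m)"
        unfolding rm using R dp0 by (simp add: Rm field_simps)
      have P: "4 * dp * 2 ^ m * R ^ (m - 1) \<ge> 0" using dp0 R by simp
      have "R / (4 * dp) * r ^ m \<le> real N * r ^ m" using NR r0 by (intro mult_right_mono) auto
      also have "\<dots> \<le> M * T powr \<gamma> * 2 ^ (m + 1) * R ^ (m - 1) * T" using big2 by (simp add: m_def)
      finally have "h ^ m \<le> (4 * dp * 2 ^ m * R ^ (m - 1)) * (M * T powr \<gamma> * 2 ^ (m + 1) * R ^ (m - 1) * T)"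
        unfolding key using P by (intro mult_left_mono) auto
      also have "\<dots> = K0 * dp * (T powr \<gamma> * T)"
      proof -
        have e1: "(2::real) ^ (2 * m + 3) = 4 * 2 ^ m * 2 ^ (m + 1)"
        proof -
          have "2 * m + 3 = 2 + (m + (m + 1))" by simp
          then show ?thesis by (simp only: power_add) simp
        qed
        have e2: "R ^ (2 * m - 2) = R ^ (m - 1) * R ^ (m - 1)"
        proof -
          have "2 * m - 2 = (m - 1) + (m - 1)" using m1 by simp
          then show ?thesis by (simp only: power_add)
        qed
        show ?thesis unfolding K0_def m_def[symmetric] e1 e2 by (simp add: algebra_simps)
      qed
      also have "\<dots> \<le> K0 * D * (T powr \<gamma> * T)"
      proof -
        have "dp \<le> D" using dpd del by (simp add: D_def)
        then show ?thesis using K0 T0 by (intro mult_right_mono mult_left_mono) auto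
      qed
      also have "T powr \<gamma> * T = T powr (1 + \<gamma>)"
        using T0 by (simp add: powr_add)
      finally show ?thesis using hm by simp
    qed
    show ?thesis
    proof (cases "(8 * D * A / h) powr (1 / (1 - a)) \<le> 4 * D")
      case True
      then have "T = 4 * D" by (simp add: T_def)
      then have "h \<le> C1 * D powr a"
        using alg_case1[OF n0 g0 K0 h0 D0] hpow by (simp add: C1_def a_def)
      also have "\<dots> \<le> max C1 (C2 * A powr (b / (n + b))) * D powr a"
        using D0 by (intro mult_right_mono) auto
      finally show ?thesis .
    next
      case False
      then have TT: "T = (8 * D * A / h) powr (1 / (1 - a))" by (simp add: T_def)
      have A0: "A > 0"
      proof (rule ccontr)
        assume "\<not> A > 0"
        then have "A = 0" using A by simp
        then show False using False D0 by simp
      qed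
      have "h \<le> C2 * A powr (b / (n + b)) * D powr a"
        using alg_case2[OF n0 g0 K0 h0 D0 A0 a_def a01(2) b_def] hpow TT by (simp add: C2_def)
      also have "\<dots> \<le> max C1 (C2 * A powr (b / (n + b))) * D powr a"
        using D0 by (intro mult_right_mono) auto
      finally show ?thesis .
    qed
  qed
  show ?thesis using main hab goal_eq
    by (simp add: n_def a_def b_def K0_def C1_def C2_def)
qed




lemma sup_fix:
  fixes A C1 C2 \<theta> :: real
  assumes "A \<ge> 0" "C1 \<ge> 0" "C2 \<ge> 0" "0 < \<theta>" "\<theta> < 1" "A \<le> max C1 (C2 * A powr \<theta>)"
  shows "A \<le> max C1 (C2 powr (1 / (1 - \<theta>)))"
proof (cases "A \<le> C1")
  case True then show ?thesis by simp
next
  case False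
  then have A0: "A > 0" using assms(2) by simp
  have "A \<le> C2 * A powr \<theta>" using assms(6) False by simp
  then have "A / A powr \<theta> \<le> C2" using A0 by (simp add: field_simps)
  moreover have "A / A powr \<theta> = A powr (1 - \<theta>)" using A0 by (simp add: powr_diff)
  ultimately have "A powr (1 - \<theta>) \<le> C2" by simp
  then have "(A powr (1 - \<theta>)) powr (1 / (1 - \<theta>)) \<le> C2 powr (1 / (1 - \<theta>))"
    using assms(5) by (intro powr_mono2) auto
  moreover have "(A powr (1 - \<theta>)) powr (1 / (1 - \<theta>)) = A" using A0 assms(5) by (simp add: powr_powr)
  ultimately show ?thesis by simp
qed

theorem lemma4p3:
  fixes \<Omega> :: "'a::euclidean_space set" and M \<gamma> :: real
  assumes "DIM('a) \<ge> 3"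
    and "open \<Omega>" and "connected \<Omega>" and "bounded \<Omega>" and "convex \<Omega>" and "\<Omega> \<noteq> {}"
    and "M > 0" and "0 \<le> \<gamma>" and "\<gamma> < real DIM('a) - 2"
  shows "\<exists>C. \<forall>u :: 'a \<Rightarrow> real.
           continuous_on (closure \<Omega>) u \<and> convex_on \<Omega> u \<and>
           (\<forall>x \<in> frontier \<Omega>. u x = 0) \<and>
           aleksandrov_det_le u \<Omega> (\<lambda>x. M * infdist x (frontier \<Omega>) powr \<gamma>)
           \<longrightarrow> (\<forall>x \<in> \<Omega>. \<bar>u x\<bar> \<le> C * infdist x (frontier \<Omega>) powr ((2 + \<gamma>) / real DIM('a)))"
proof -
  note op = assms(2) and bd = assms(4) and cv = assms(5) and ne = assms(6) and M = assms(7)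
    and g0 = assms(8) and g1 = assms(9)
  obtain B where B: "B > 0" "\<forall>x\<in>closure \<Omega>. norm x \<le> B"
    using bounded_closure[OF bd] unfolding bounded_pos by blast
  define R where "R = 2 * B + 1"
  have R0: "R > 0" using B by (simp add: R_def)
  have Rb: "\<forall>x\<in>closure \<Omega>. \<forall>y\<in>closure \<Omega>. norm (x - y) < R"
  proof (intro ballI)
    fix x y assume "x \<in> closure \<Omega>" "y \<in> closure \<Omega>"
    then have "norm x \<le> B" "norm y \<le> B" using B by auto
    then show "norm (x - y) < R" using norm_triangle_ineq4[of x y] by (simp add: R_def)
  qed
  define n where "n = real DIM('a)"
  define a where "a = (2 + \<gamma>) / n"
  define b where "b = (1 + \<gamma>) / (1 - a)"
  define K0 where "K0 = M * 2 ^ (2 * DIM('a) + 3) * R ^ (2 * DIM('a) - 2)"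
  define C1 where "C1 = (K0 * 4 powr (1 + \<gamma>)) powr (1 / n)"
  define C2 where "C2 = (K0 * 8 powr b) powr (1 / (n + b))"
  define \<theta> where "\<theta> = b / (n + b)"
  define Cst where "Cst = max C1 (C2 powr (1 / (1 - \<theta>)))"
  have n3: "n > 2 + \<gamma>" using g1 by (simp add: n_def)
  have n0: "n > 0" using n3 g0 by linarith
  have a01: "0 < a" "a < 1" using n3 n0 g0 by (auto simp: a_def field_simps)
  have b0: "b > 0" using a01 g0 by (simp add: b_def)
  have th: "0 < \<theta>" "\<theta> < 1" using b0 n0 by (auto simp: \<theta>_def field_simps)
  have C1: "C1 \<ge> 0" by (simp add: C1_def)
  have C2: "C2 \<ge> 0" by (simp add: C2_def)
  have Fne: "frontier \<Omega> \<noteq> {}"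
  proof -
    have "\<Omega> \<noteq> UNIV" using bd not_bounded_UNIV by metis
    then show ?thesis using ne by (simp add: frontier_eq_empty)
  qed
  show ?thesis
  proof (intro exI allI impI)
    fix u :: "'a \<Rightarrow> real"
    assume "continuous_on (closure \<Omega>) u \<and> convex_on \<Omega> u \<and> (\<forall>x \<in> frontier \<Omega>. u x = 0) \<and>
           aleksandrov_det_le u \<Omega> (\<lambda>x. M * infdist x (frontier \<Omega>) powr \<gamma>)"
    then have cont: "continuous_on (closure \<Omega>) u" and cu: "convex_on \<Omega> u"
      and fr0: "\<forall>x \<in> frontier \<Omega>. u x = 0"
      and al: "aleksandrov_det_le u \<Omega> (\<lambda>x. M * infdist x (frontier \<Omega>) powr \<gamma>)" by auto
    obtain z0 where z0: "z0 \<in> frontier \<Omega>" using Fne by blast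
    have nonpos: "\<forall>x\<in>\<Omega>. u x \<le> 0"
      using u_nonpos[OF op cv bd cu cont fr0 _ z0] by blast
    obtain K where K: "\<forall>x\<in>closure \<Omega>. norm (u x) \<le> K"
    proof -
      have "compact (u ` closure \<Omega>)"
        using compact_continuous_image[OF cont] bd by (simp add: compact_eq_bounded_closed bounded_closure)
      then have "bounded (u ` closure \<Omega>)" by (rule compact_imp_bounded)
      then show ?thesis using that unfolding bounded_iff by blast
    qed
    have fixd: "\<bar>u x\<bar> \<le> Cst * (infdist x (frontier \<Omega>) + \<delta>) powr a" if del: "\<delta> > 0" and x: "x \<in> \<Omega>" for \<delta> x
    proof -
      define q where "q y = \<bar>u y\<bar> / (infdist y (frontier \<Omega>) + \<delta>) powr a" for y
      define A where "A = Sup (q ` \<Omega>)"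
      have den: "(infdist y (frontier \<Omega>) + \<delta>) powr a \<ge> \<delta> powr a" for y
        using a01 del by (intro powr_mono2) (auto intro: infdist_nonneg)
      have den0: "(infdist y (frontier \<Omega>) + \<delta>) powr a > 0" for y
        using del infdist_nonneg[of y "frontier \<Omega>"] by simp
      have bdd: "bdd_above (q ` \<Omega>)"
      proof (rule bdd_aboveI2)
        fix y assume y: "y \<in> \<Omega>"
        have "\<bar>u y\<bar> \<le> K" using K y closure_subset by force
        then have "q y \<le> K / (infdist y (frontier \<Omega>) + \<delta>) powr a"
          unfolding q_def using den0[of y] by (intro divide_right_mono) auto
        also have "\<dots> \<le> K / \<delta> powr a"
        proof -
          have K0': "K \<ge> 0" using K y closure_subset by force
          have "0 < (infdist y (frontier \<Omega>) + \<delta>) powr a * \<delta> powr a"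
            using den0[of y] del by simp
          then show ?thesis using K0' den[of y] del by (intro divide_left_mono) auto
        qed
        finally show "q y \<le> K / \<delta> powr a" .
      qed
      have qle: "q y \<le> A" if "y \<in> \<Omega>" for y unfolding A_def by (rule cSUP_upper[OF that bdd])
      have A0: "A \<ge> 0" using qle[OF x] by (simp add: q_def) (smt (verit) den0 divide_nonneg_pos abs_ge_zero)
      have hypA: "\<forall>y\<in>\<Omega>. \<bar>u y\<bar> \<le> A * (infdist y (frontier \<Omega>) + \<delta>) powr ((2 + \<gamma>) / real DIM('a))"
      proof
        fix y assume y: "y \<in> \<Omega>"
        have "\<bar>u y\<bar> = q y * (infdist y (frontier \<Omega>) + \<delta>) powr a" using den0[of y] by (simp add: q_def)
        also have "\<dots> \<le> A * (infdist y (frontier \<Omega>) + \<delta>) powr a"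
          using qle[OF y] den0[of y] by (intro mult_right_mono) auto
        finally show "\<bar>u y\<bar> \<le> A * (infdist y (frontier \<Omega>) + \<delta>) powr ((2 + \<gamma>) / real DIM('a))"
          by (simp add: a_def n_def)
      qed
      have coreb: "\<bar>u y\<bar> \<le> max C1 (C2 * A powr \<theta>) * (infdist y (frontier \<Omega>) + \<delta>) powr a" if y: "y \<in> \<Omega>" for y
        using core[OF op cv bd R0 Rb cont fr0 al M g0 g1 nonpos del A0 hypA y Fne]
        unfolding C1_def C2_def \<theta>_def K0_def b_def a_def n_def .
      have "Sup (q ` \<Omega>) \<le> max C1 (C2 * A powr \<theta>)"
      proof (rule cSUP_least)
        show "\<Omega> \<noteq> {}" by (rule ne)
        fix y assume y: "y \<in> \<Omega>"
        show "q y \<le> max C1 (C2 * A powr \<theta>)"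
          using coreb[OF y] den0[of y] by (simp add: q_def divide_le_eq)
      qed
      then have "A \<le> max C1 (C2 * A powr \<theta>)" unfolding A_def[symmetric] .
      then have "A \<le> Cst" unfolding Cst_def by (rule sup_fix[OF A0 C1 C2 th])
      have "\<bar>u x\<bar> \<le> A * (infdist x (frontier \<Omega>) + \<delta>) powr a" using hypA x by (simp add: a_def n_def)
      also have "\<dots> \<le> Cst * (infdist x (frontier \<Omega>) + \<delta>) powr a"
        using \<open>A \<le> Cst\<close> den0[of x] by (intro mult_right_mono) auto
      finally show ?thesis .
    qed
    show "\<forall>x \<in> \<Omega>. \<bar>u x\<bar> \<le> Cst * infdist x (frontier \<Omega>) powr ((2 + \<gamma>) / real DIM('a))"
    proof
      fix x assume x: "x \<in> \<Omega>"
      define d where "d = infdist x (frontier \<Omega>)"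
      have d0: "d \<ge> 0" by (simp add: d_def infdist_nonneg)
      have lim: "(\<lambda>k. Cst * (d + 1 / (real k + 1)) powr a) \<longlonglongrightarrow> Cst * (d + 0) powr a"
      proof -
        have xF: "x \<notin> frontier \<Omega>" using x op by (simp add: frontier_def interior_open)
        have dp: "d > 0" unfolding d_def by (rule infdist_pos_not_in_closed[OF frontier_closed Fne xF])
        have l1: "(\<lambda>k. 1 / (real k + 1)) \<longlonglongrightarrow> 0"
          using LIMSEQ_inverse_real_of_nat by (simp add: inverse_eq_divide add.commute)
        have l2: "(\<lambda>k. d + 1 / (real k + 1)) \<longlonglongrightarrow> d + 0" by (intro tendsto_add tendsto_const l1)
        have l3: "(\<lambda>k. (d + 1 / (real k + 1)) powr a) \<longlonglongrightarrow> (d + 0) powr a"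
          by (rule tendsto_powr[OF l2 tendsto_const]) (use dp in simp)
        show ?thesis by (intro tendsto_mult tendsto_const l3)
      qed
      have "\<bar>u x\<bar> \<le> Cst * (d + 0) powr a"
        by (rule LIMSEQ_le_const[OF lim]) (use fixd x in \<open>auto simp: d_def\<close>)
      then show "\<bar>u x\<bar> \<le> Cst * infdist x (frontier \<Omega>) powr ((2 + \<gamma>) / real DIM('a))"
        by (simp add: d_def a_def n_def)
    qed
  qed
qed


end
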